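(* Fix a realization of the satellite positions such that $\tilde{\mathbf J}$ is nonsingular, fix $\rho>0$, and suppose $\eta=\kappa W_e^2$ for a constant $\kappa>0$ independent of the effective bandwidth $W_e>0$. Then, as $W_e\to\infty$, $\|\mathbf J^{-1}-\tilde{\mathbf J}^{-1}\|=o(W_e^{-2})$; consequently $\mathrm{CRB}_{xy}-\widetilde{\mathrm{CRB}}_{xy}=o(W_e^{-2})$ and $\mathrm{CRB}_z-\widetilde{\mathrm{CRB}}_z=o(W_e^{-2})$.
   Context: With satellites indexed $i=1,\dots,N$, distances $D_i>0$ to the receiver, local zenith angles $\phi_{L,i}$, azimuths $\theta_i$, visibility indicators $\mathbf 1_i$ (visible iff $\phi_{L,i}\le\phi_{L,\max}$), set $L_i=2\eta\rho/D_i^2$, $K_i=\frac{2\rho}{D_i^4}(1+\eta D_i^2)$, $u_i=(\sin\phi_{L,i}\cos\theta_i,\sin\phi_{L,i}\sin\theta_i,\cos\phi_{L,i})^T$. The RSS+TDOA Fisher information matrix is $\mathbf J=\sum_i\mathbf 1_i\begin{pmatrix}K_iu_iu_i^T & L_iu_i\\ L_iu_i^T & L_i\end{pmatrix}$ and the TDOA-only one is $\tilde{\mathbf J}=\sum_i\mathbf 1_iL_i\begin{pmatrix}u_iu_i^T & u_i\\ u_i^T&1\end{pmatrix}$ (parameters ordered $x,y,z,T_0$). $\mathrm{CRB}_{xy}=[\mathbf J^{-1}]_{11}+[\mathbf J^{-1}]_{22}$, $\mathrm{CRB}_z=[\mathbf J^{-1}]_{33}$, and analogously with tildes for $\tilde{\mathbf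 J}$. $\|\cdot\|$ is any matrix norm. *)

theory Defs
  imports "HOL-Analysis.Analysis" "HOL-Library.Landau_Symbols"
begin

text \<open>Parameters are ordered (x, y, z, T0); they are indexed 1,2,3,4 in real^4
  (via the library function vector, whose first entry has index 1).\<close>

definition outer4 :: "real^4 \<Rightarrow> real^4 \<Rightarrow> real^4^4" where
  "outer4 a b = (\<chi> i j. a $ i * b $ j)"

text \<open>Unit line-of-sight vector u_i, padded with a zero T0-component.\<close>
definition u0 :: "real \<Rightarrow> real \<Rightarrow> real^4" where
  "u0 phi theta = vector [sin phi * cos theta, sin phi * sin theta, cos phi, 0]"

text \<open>e4: the T0 coordinate vector.\<close>
definition e4 :: "real^4" where
  "e4 = vector [0, 0, 0, 1]"

definition Lcoef :: "real \<Rightarrow> real \<Rightarrow> real \<Rightarrow> real" where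
  "Lcoef eta rho D = 2 * eta * rho / D^2"

definition Kcoef :: "real \<Rightarrow> real \<Rightarrow> real \<Rightarrow> real" where
  "Kcoef eta rho D = 2 * rho / D^4 * (1 + eta * D^2)"

text \<open>Block matrix [K u u^T, L u; L u^T, L] as a 4x4 matrix.\<close>
definition blockJ :: "real \<Rightarrow> real \<Rightarrow> real \<Rightarrow> real \<Rightarrow> real \<Rightarrow> real^4^4" where
  "blockJ eta rho D phi theta =
     Kcoef eta rho D *\<^sub>R outer4 (u0 phi theta) (u0 phi theta)
   + Lcoef eta rho D *\<^sub>R outer4 (u0 phi theta) e4
   + Lcoef eta rho D *\<^sub>R outer4 e4 (u0 phi theta)
   + Lcoef eta rho D *\<^sub>R outer4 e4 e4"

text \<open>Block matrix L [u u^T, u; u^T, 1].\<close>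
definition blockJt :: "real \<Rightarrow> real \<Rightarrow> real \<Rightarrow> real \<Rightarrow> real \<Rightarrow> real^4^4" where
  "blockJt eta rho D phi theta =
     Lcoef eta rho D *\<^sub>R outer4 (u0 phi theta + e4) (u0 phi theta + e4)"

text \<open>RSS+TDOA FIM: sum over the visible satellites i = 1..N.\<close>
definition FIM :: "nat \<Rightarrow> (nat \<Rightarrow> real) \<Rightarrow> (nat \<Rightarrow> real) \<Rightarrow> (nat \<Rightarrow> real) \<Rightarrow> real
    \<Rightarrow> real \<Rightarrow> real \<Rightarrow> real^4^4" where
  "FIM N D phi theta phimax eta rho =
     (\<Sum>i\<in>{1..N}. (if phi i \<le> phimax then 1 else 0) *\<^sub>R blockJ eta rho (D i) (phi i) (theta i))"

text \<open>TDOA-only FIM.\<close>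
definition FIMt :: "nat \<Rightarrow> (nat \<Rightarrow> real) \<Rightarrow> (nat \<Rightarrow> real) \<Rightarrow> (nat \<Rightarrow> real) \<Rightarrow> real
    \<Rightarrow> real \<Rightarrow> real \<Rightarrow> real^4^4" where
  "FIMt N D phi theta phimax eta rho =
     (\<Sum>i\<in>{1..N}. (if phi i \<le> phimax then 1 else 0) *\<^sub>R blockJt eta rho (D i) (phi i) (theta i))"

definition CRB_xy :: "real^4^4 \<Rightarrow> real" where
  "CRB_xy J = matrix_inv J $ 1 $ 1 + matrix_inv J $ 2 $ 2"

definition CRB_z :: "real^4^4 \<Rightarrow> real" where
  "CRB_z J = matrix_inv J $ 3 $ 3"

end

theory Submission
  imports Defs
begin


lemma my_add_rdistrib: "((A::real^'n^'m) + B) ** C = A ** C + B ** C"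
  by (vector matrix_matrix_mult_def sum.distrib[symmetric] field_simps)

lemma my_scal_right: "(A::real^'n^'m) ** (k *\<^sub>R C) = k *\<^sub>R (A ** C)"
  by (vector matrix_matrix_mult_def sum_distrib_left field_simps)

lemma minv_unique:
  fixes P Q :: "real^'n^'n"
  assumes "Q ** P = mat 1"
  shows "matrix_inv P = Q"
proof -
  have inv: "invertible P" using assms invertible_left_inverse by blast
  then have "P ** matrix_inv P = mat 1"
    unfolding matrix_inv_def invertible_def by (rule someI_ex[THEN conjunct1])
  then have "Q ** (P ** matrix_inv P) = Q" by simp
  then show ?thesis by (simp add: matrix_mul_assoc assms)
qed

lemma minv_props:
  fixes P :: "real^'n^'n"
  assumes "invertible P"
  shows "P ** matrix_inv P = mat 1" "matrix_inv P ** P = mat 1"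
  using assms unfolding matrix_inv_def invertible_def
  by (rule someI_ex[THEN conjunct1], rule someI_ex[THEN conjunct2])

lemma axis_entry:
  fixes P :: "real^'n^'m"
  shows "(P *v axis j 1) $ i = P $ i $ j"
  by (simp add: matrix_vector_mult_def axis_def if_distrib cong: if_cong)

lemma key:
  fixes M A :: "real^'n^'n"
  assumes invM: "invertible M"
  shows "\<exists>C e0. e0 > 0 \<and> (\<forall>e\<ge>e0. \<forall>i j.
     \<bar>(matrix_inv (e *\<^sub>R M + A) - matrix_inv (e *\<^sub>R M)) $ i $ j\<bar> \<le> C / e^2)"
proof -
  define B where "B = matrix_inv M"
  have MB: "M ** B = mat 1" "B ** M = mat 1" using minv_props[OF invM] B_def by auto
  obtain b where b: "b > 0" "\<And>w. norm (B *v w) \<le> b * norm w"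
    using linear_bounded_pos[OF matrix_vector_mul_linear] by blast
  obtain a where a: "a > 0" "\<And>w. norm (A *v w) \<le> a * norm w"
    using linear_bounded_pos[OF matrix_vector_mul_linear] by blast
  have Mlow: "norm v \<le> b * norm (M *v v)" for v
  proof -
    have "v = B *v (M *v v)" by (simp add: matrix_vector_mul_assoc MB)
    then show ?thesis using b(2)[of "M *v v"] by simp
  qed
  show ?thesis
  proof (intro exI conjI allI impI)
    show "0 < 2*a*b" using a b by simp
    fix e :: real and i j
    assume e: "2*a*b \<le> e"
    have epos: "e > 0" using e a b by (smt (verit) mult_pos_pos)
    define X where "X = e *\<^sub>R M + A"
    have Xlow: "(e/(2*b)) * norm v \<le> norm (X *v v)" for v
    proof -
      have "X *v v = e *\<^sub>R (M *v v) + A *v v"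
        by (simp add: X_def matrix_vector_mult_add_rdistrib scaleR_matrix_vector_assoc)
      then have "norm (X *v v) \<ge> e * norm (M *v v) - norm (A *v v)"
        using norm_diff_ineq[of "e *\<^sub>R (M *v v)" "A *v v"] epos by simp
      moreover have "e * norm (M *v v) \<ge> (e/b) * norm v"
        using Mlow[of v] b epos by (simp add: field_simps)
      moreover have "(e/b) * norm v - a * norm v \<ge> (e/(2*b)) * norm v"
      proof -
        have "e/b - a \<ge> e/(2*b)" using e b a by (simp add: field_simps)
        then show ?thesis using norm_ge_zero[of v]
          by (metis left_diff_distrib mult_right_mono)
      qed
      ultimately show ?thesis using a(2)[of v] by linarith
    qed
    have "\<forall>v. X *v v = 0 \<longrightarrow> v = 0"
    proof (intro allI impI)
      fix v assume "X *v v = 0"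
      then have "(e/(2*b)) * norm v \<le> 0" using Xlow[of v] by simp
      moreover have "e/(2*b) > 0" using epos b by simp
      ultimately have "norm v \<le> 0"
        by (metis mult_le_0_iff not_less norm_ge_zero order.strict_iff_not)
      then show "v = 0" by simp
    qed
    then have invX: "invertible X"
      using matrix_left_invertible_ker invertible_left_inverse by blast
    define Y where "Y = matrix_inv X"
    have XY: "X ** Y = mat 1" "Y ** X = mat 1" using minv_props[OF invX] Y_def by auto
    have Ybd: "norm (Y *v w) \<le> (2*b/e) * norm w" for w
    proof -
      have "X *v (Y *v w) = w" by (simp add: matrix_vector_mul_assoc XY)
      then have "(e/(2*b)) * norm (Y *v w) \<le> norm w" using Xlow[of "Y *v w"] by simp
      then show ?thesis using epos b by (simp add: field_simps)
    qed
    have invEM: "matrix_inv (e *\<^sub>R M) = (1/e) *\<^sub>R B"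
      by (rule minv_unique) (use epos in \<open>simp add: matrix_scalar_ac scalar_matrix_assoc[symmetric] MB\<close>)
    have XB: "X ** ((1/e) *\<^sub>R B) = mat 1 + (1/e) *\<^sub>R (A ** B)"
      using epos by (simp add: X_def my_add_rdistrib matrix_scalar_ac scalar_matrix_assoc[symmetric] MB scaleR_add_right)
    have "(1/e) *\<^sub>R B = Y ** (X ** ((1/e) *\<^sub>R B))"
      by (simp add: matrix_mul_assoc XY)
    also have "\<dots> = Y + (1/e) *\<^sub>R (Y ** (A ** B))"
      unfolding XB by (simp only: matrix_add_ldistrib my_scal_right matrix_mul_rid)
    finally have D: "matrix_inv X - matrix_inv (e *\<^sub>R M) = - ((1/e) *\<^sub>R (Y ** (A ** B)))"
      using invEM Y_def by (simp add: algebra_simps)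
    have "\<bar>(Y ** (A ** B)) $ i $ j\<bar> \<le> (2*b/e) * (a * b)"
    proof -
      have "\<bar>(Y ** (A ** B)) $ i $ j\<bar> = \<bar>(Y *v (A *v (B *v axis j 1))) $ i\<bar>"
        by (simp add: matrix_vector_mul_assoc axis_entry)
      also have "\<dots> \<le> norm (Y *v (A *v (B *v axis j 1)))" by (rule component_le_norm_cart)
      also have "\<dots> \<le> (2*b/e) * norm (A *v (B *v axis j 1))" by (rule Ybd)
      also have "\<dots> \<le> (2*b/e) * (a * b)"
      proof -
        have "norm (A *v (B *v axis j 1)) \<le> a * norm (B *v axis j 1)" by (rule a(2))
        also have "\<dots> \<le> a * (b * norm (axis j (1::real)))"
          using b(2)[of "axis j 1"] a(1) by (simp add: mult_left_mono)
        finally have "norm (A *v (B *v axis j 1)) \<le> a * b" by simp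
        moreover have "2*b/e \<ge> 0" using epos b by simp
        ultimately show ?thesis by (rule mult_left_mono)
      qed
      finally show ?thesis .
    qed
    show "\<bar>(matrix_inv (e *\<^sub>R M + A) - matrix_inv (e *\<^sub>R M)) $ i $ j\<bar> \<le> (2*a*b*b) / e^2"
    proof -
      have "\<bar>(matrix_inv (e *\<^sub>R M + A) - matrix_inv (e *\<^sub>R M)) $ i $ j\<bar>
          = \<bar>(Y ** (A ** B)) $ i $ j\<bar> / e" using epos by (simp add: D[unfolded X_def])
      also have "\<dots> \<le> ((2*b/e) * (a * b)) / e"
        by (rule divide_right_mono) (use \<open>\<bar>(Y ** (A ** B)) $ i $ j\<bar> \<le> (2*b/e) * (a * b)\<close> epos in auto)
      also have "\<dots> = (2*a*b*b) / e^2" by (simp add: power2_eq_square field_simps)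
      finally show ?thesis .
    qed
  qed
qed

lemma outer4_add_left: "outer4 (a + b) c = outer4 a c + outer4 b c"
  by (simp add: outer4_def vec_eq_iff algebra_simps)
lemma outer4_add_right: "outer4 a (b + c) = outer4 a b + outer4 a c"
  by (simp add: outer4_def vec_eq_iff algebra_simps)

lemma blockJt_scale: "blockJt eta rho D p t = eta *\<^sub>R blockJt 1 rho D p t"
  by (simp add: blockJt_def Lcoef_def)

lemma blockJ_split: "blockJ eta rho D p t = eta *\<^sub>R blockJt 1 rho D p t
   + (2*rho/D^4) *\<^sub>R outer4 (u0 p t) (u0 p t)"
proof -
  have K: "Kcoef eta rho D = 2*rho/D^4 + eta * Lcoef 1 rho D"
    by (cases "D = 0") (simp_all add: Kcoef_def Lcoef_def field_simps power4_eq_xxxx power2_eq_square)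
  have L: "Lcoef eta rho D = eta * Lcoef 1 rho D" by (simp add: Lcoef_def)
  show ?thesis
    unfolding blockJ_def blockJt_def K L
    by (simp add: outer4_add_left outer4_add_right scaleR_add_right scaleR_add_left algebra_simps)
qed

lemma FIMt_scale: "FIMt N D phi theta phimax eta rho = eta *\<^sub>R FIMt N D phi theta phimax 1 rho"
  unfolding FIMt_def
  by (subst blockJt_scale) (simp add: scaleR_sum_right mult.commute)

lemma FIM_split: "FIM N D phi theta phimax eta rho = eta *\<^sub>R FIMt N D phi theta phimax 1 rho
   + (\<Sum>i\<in>{1..N}. (if phi i \<le> phimax then 1 else 0) *\<^sub>R ((2*rho/D i^4) *\<^sub>R outer4 (u0 (phi i) (theta i)) (u0 (phi i) (theta i))))"
  unfolding FIM_def FIMt_def blockJ_split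
  by (simp add: scaleR_sum_right scaleR_add_right sum.distrib mult.commute)

lemma norm_nested_le: "norm (x::real^'n^'m) \<le> (\<Sum>i\<in>UNIV. \<Sum>j\<in>UNIV. \<bar>x $ i $ j\<bar>)"
proof -
  have "norm x \<le> (\<Sum>i\<in>UNIV. norm (x $ i))"
    unfolding norm_vec_def by (rule L2_set_le_sum) simp
  also have "\<dots> \<le> (\<Sum>i\<in>UNIV. \<Sum>j\<in>UNIV. \<bar>x $ i $ j\<bar>)"
    by (rule sum_mono) (rule norm_le_l1_cart)
  finally show ?thesis .
qed

lemma smallo_from_bound:
  fixes f :: "real \<Rightarrow> real"
  assumes "eventually (\<lambda>W. \<bar>f W\<bar> \<le> C / W^4) at_top"
  shows "f \<in> o[at_top](\<lambda>W. 1/W^2)"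
proof (rule landau_o.smallI)
  fix c :: real assume c: "c > 0"
  have "eventually (\<lambda>W. W \<ge> max 1 (\<bar>C\<bar>/c)) at_top" by (rule eventually_ge_at_top)
  with assms show "eventually (\<lambda>W. norm (f W) \<le> c * norm (1/W^2)) at_top"
  proof eventually_elim
    case (elim W)
    then have W1: "W \<ge> 1" and W2: "W \<ge> \<bar>C\<bar>/c" by auto
    have "W * W \<ge> W" using W1 by (simp add: mult_le_cancel_left1)
    have "\<bar>C\<bar> \<le> c * W" using W2 c by (simp add: field_simps)
    also have "\<dots> \<le> c * (W * W)" using \<open>W * W \<ge> W\<close> c by simp
    finally have "c * W^2 \<ge> \<bar>C\<bar>" by (simp add: power2_eq_square)
    then have "C / W^4 \<le> c * W^2 / W^4"
      using W1 by (intro divide_right_mono) auto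
    also have "\<dots> = c * (1/W^2)" using W1 by (simp add: field_simps power4_eq_xxxx power2_eq_square)
    finally show ?case using elim c by simp
  qed
qed


theorem mainTheorem4:
  fixes N :: nat and D phi theta :: "nat \<Rightarrow> real"
    and phimax rho kappa :: real
  assumes D_pos: "\<And>i. i \<in> {1..N} \<Longrightarrow> D i > 0"
    and rho_pos: "rho > 0"
    and kappa_pos: "kappa > 0"
    and nonsing: "\<And>W. W > 0 \<Longrightarrow> invertible (FIMt N D phi theta phimax (kappa * W^2) rho)"
  shows "(\<lambda>W. norm (matrix_inv (FIM N D phi theta phimax (kappa * W^2) rho)
                    - matrix_inv (FIMt N D phi theta phimax (kappa * W^2) rho)))
           \<in> o[at_top](\<lambda>W. 1 / W^2)
     \<and> (\<lambda>W. CRB_xy (FIM N D phi theta phimax (kappa * W^2) rho)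
              - CRB_xy (FIMt N D phi theta phimax (kappa * W^2) rho))
           \<in> o[at_top](\<lambda>W. 1 / W^2)
     \<and> (\<lambda>W. CRB_z (FIM N D phi theta phimax (kappa * W^2) rho)
              - CRB_z (FIMt N D phi theta phimax (kappa * W^2) rho))
           \<in> o[at_top](\<lambda>W. 1 / W^2)"
  
proof -
  define Mt where "Mt = FIMt N D phi theta phimax 1 rho"
  define A0 where "A0 = (\<Sum>i\<in>{1..N}. (if phi i \<le> phimax then 1 else 0) *\<^sub>R ((2*rho/D i^4) *\<^sub>R outer4 (u0 (phi i) (theta i)) (u0 (phi i) (theta i))))"
  have FIMeq: "\<And>e. FIM N D phi theta phimax e rho = e *\<^sub>R Mt + A0"
    unfolding Mt_def A0_def by (rule FIM_split)
  have FIMteq: "\<And>e. FIMt N D phi theta phimax e rho = e *\<^sub>R Mt"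
    unfolding Mt_def by (rule FIMt_scale)
  have "invertible (kappa *\<^sub>R Mt)" using nonsing[of 1] FIMteq by simp
  then have "invertible ((1/kappa) *\<^sub>R (kappa *\<^sub>R Mt))"
    by (rule scalar_invertible[rotated]) (use kappa_pos in simp)
  moreover have "(1/kappa) *\<^sub>R (kappa *\<^sub>R Mt) = Mt" using kappa_pos by simp
  ultimately have invM: "invertible Mt" by simp
  obtain C e0 where e0: "e0 > 0" and Cb: "\<And>e i j. e \<ge> e0 \<Longrightarrow>
     \<bar>(matrix_inv (e *\<^sub>R Mt + A0) - matrix_inv (e *\<^sub>R Mt)) $ i $ j\<bar> \<le> C / e^2"
    using key[OF invM, of A0] by blast
  define Dl where "Dl = (\<lambda>W. matrix_inv (FIM N D phi theta phimax (kappa * W^2) rho)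
                    - matrix_inv (FIMt N D phi theta phimax (kappa * W^2) rho))"
  have ev: "eventually (\<lambda>W. \<forall>i j. \<bar>Dl W $ i $ j\<bar> \<le> (C/kappa^2) / W^4) at_top"
  proof -
    have "eventually (\<lambda>W. W \<ge> max 1 (e0/kappa)) at_top" by (rule eventually_ge_at_top)
    then show ?thesis
    proof eventually_elim
      case (elim W)
      then have W1: "W \<ge> 1" and W2: "W \<ge> e0/kappa" by auto
      have "W * W \<ge> W" using W1 by (simp add: mult_le_cancel_left1)
      have "e0 \<le> kappa * W" using W2 kappa_pos by (simp add: field_simps)
      also have "\<dots> \<le> kappa * (W * W)" using \<open>W * W \<ge> W\<close> kappa_pos by simp
      finally have "kappa * W^2 \<ge> e0" by (simp add: power2_eq_square)
      then have "\<And>i j. \<bar>Dl W $ i $ j\<bar> \<le> C / (kappa * W^2)^2"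
        using Cb unfolding Dl_def FIMeq FIMteq by blast
      moreover have "C / (kappa * W^2)^2 = (C/kappa^2) / W^4"
        by (simp add: power_mult_distrib power4_eq_xxxx power2_eq_square)
      ultimately show ?case by simp
    qed
  qed
  have 1: "(\<lambda>W. norm (Dl W)) \<in> o[at_top](\<lambda>W. 1 / W^2)"
  proof (rule smallo_from_bound)
    show "eventually (\<lambda>W. \<bar>norm (Dl W)\<bar> \<le> (16 * (C/kappa^2)) / W^4) at_top"
      using ev
    proof eventually_elim
      case (elim W)
      have "norm (Dl W) \<le> (\<Sum>i\<in>UNIV. \<Sum>j\<in>UNIV. \<bar>Dl W $ i $ j\<bar>)" by (rule norm_nested_le)
      also have "\<dots> \<le> (\<Sum>i\<in>(UNIV::4 set). \<Sum>j\<in>(UNIV::4 set). (C/kappa^2) / W^4)"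
        using elim by (intro sum_mono) auto
      also have "\<dots> = (16 * (C/kappa^2)) / W^4" by simp
      finally show ?case by simp
    qed
  qed
  have 2: "(\<lambda>W. CRB_xy (FIM N D phi theta phimax (kappa * W^2) rho)
              - CRB_xy (FIMt N D phi theta phimax (kappa * W^2) rho)) \<in> o[at_top](\<lambda>W. 1 / W^2)"
  proof (rule smallo_from_bound)
    show "eventually (\<lambda>W. \<bar>CRB_xy (FIM N D phi theta phimax (kappa * W^2) rho)
              - CRB_xy (FIMt N D phi theta phimax (kappa * W^2) rho)\<bar> \<le> (2 * (C/kappa^2)) / W^4) at_top"
      using ev
    proof eventually_elim
      case (elim W)
      have "CRB_xy (FIM N D phi theta phimax (kappa * W^2) rho)
              - CRB_xy (FIMt N D phi theta phimax (kappa * W^2) rho) = Dl W $ 1 $ 1 + Dl W $ 2 $ 2"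
        by (simp add: CRB_xy_def Dl_def)
      moreover have "\<bar>Dl W $ 1 $ 1\<bar> \<le> (C/kappa^2) / W^4" "\<bar>Dl W $ 2 $ 2\<bar> \<le> (C/kappa^2) / W^4"
        using elim by auto
      ultimately show ?case by simp
    qed
  qed
  have 3: "(\<lambda>W. CRB_z (FIM N D phi theta phimax (kappa * W^2) rho)
              - CRB_z (FIMt N D phi theta phimax (kappa * W^2) rho)) \<in> o[at_top](\<lambda>W. 1 / W^2)"
  proof (rule smallo_from_bound)
    show "eventually (\<lambda>W. \<bar>CRB_z (FIM N D phi theta phimax (kappa * W^2) rho)
              - CRB_z (FIMt N D phi theta phimax (kappa * W^2) rho)\<bar> \<le> (C/kappa^2) / W^4) at_top"
      using ev
    proof eventually_elim
      case (elim W)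
      have "CRB_z (FIM N D phi theta phimax (kappa * W^2) rho)
              - CRB_z (FIMt N D phi theta phimax (kappa * W^2) rho) = Dl W $ 3 $ 3"
        by (simp add: CRB_z_def Dl_def)
      then show ?case using elim by simp
    qed
  qed
  show ?thesis using 1 2 3 unfolding Dl_def by blast
qed

end
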